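(* Let $A\in\mathbb{R}^{n\times n}$ be symmetric, let $W_k\in\mathbb{R}^{n\times m}$ satisfy $W_k^TW_k=I_m$, and let $v_{k-1},v_k\in\mathbb{R}^{n\times p}$ and $\alpha_k,\beta_k\in\mathbb{R}^{p\times p}$ be given. Define $q_{k+j},\beta_{k+j}$, $j\ge1$, by the continuation process \[ \begin{aligned} \tilde q_{k+1}&=Av_k-v_k\alpha_k-v_{k-1}\beta_k^T, & q_{k+1}\beta_{k+1}&=(I_n-P_1)\tilde q_{k+1},\\ \tilde q_{k+2}&=Aq_{k+1}-v_k\beta_{k+1}^T, & q_{k+2}\beta_{k+2}&=(I_n-P_2)\tilde q_{k+2},\\ \tilde q_{k+j}&=Aq_{k+j-1}-q_{k+j-2}\beta_{k+j-1}^T, & q_{k+j}\beta_{k+j}&=(I_n-P_j)\tilde q_{k+j},\quad j\ge3, \end{aligned} \] where $P_1=W_kW_k^T$, $P_2=P_1+q_{k+1}q_{k+1}^T$, $P_j=P_2+q_{k+j-1}q_{k+j-1}^T$ for $j\ge3$, and the columns of $q_{k+j}$ form an orthonormal basis of the column space of $(I_n-P_j)\tilde q_{k+j}$, with $\beta_{k+j}$ of full row rank. Then the process can be written as \[ \begin{aligned} q_{k+1}\beta_{k+1}&=Av_k-v_k\alpha_k-v_{k-1}\beta_k^T-h_k,\\ q_{k+2}\beta_{k+2}&=Aq_{k+1}-q_{k+1}\alpha_{k+1}-v_k\beta_{k+1}^T-h_{k+1},\\ q_{k+j}\beta_{k+j}&=Aq_{k+j-1}-q_{k+j-1}\alpha_{k+j-1}-q_{k+j-2}\beta_{k+j-1}^T-h_{k+j-1},\quad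 j\ge3, \end{aligned} \] where \[ \alpha_{k+1}=q_{k+1}^T(Aq_{k+1}-v_k\beta_{k+1}^T),\qquad \alpha_{k+j-1}=q_{k+j-1}^TAq_{k+j-1}\ (j\ge3), \] and \[ \begin{aligned} h_k&=P_1\left(Av_k-v_k\alpha_k-v_{k-1}\beta_k^T\right),\\ h_{k+1}&=P_1\left(Aq_{k+1}-v_k\beta_{k+1}^T\right),\\ h_{k+j-1}&=P_1Aq_{k+j-1}+q_{k+1}\beta_{k+1}v_k^Tq_{k+j-1},\quad j\ge3. \end{aligned} \]
   Context: In cases of rank deficiency the number of columns of $q_{k+j}$ is reduced accordingly and $\beta_{k+j}$ becomes rectangular with full row rank. *)

theory Defs
  imports "Jordan_Normal_Form.DL_Rank"
begin

abbreviation colspace :: "nat \<Rightarrow> real mat \<Rightarrow> real vec set" where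
  "colspace n B \<equiv> vec_space.col_space n B"

abbreviation mrank :: "real mat \<Rightarrow> nat" where
  "mrank B \<equiv> vec_space.rank (dim_row B) B"

end

theory Submission
  imports Defs
begin


lemma trc: "A \<in> carrier_mat a b \<Longrightarrow> A\<^sup>T \<in> carrier_mat b a" by simp

lemma minus_zero_mat': "A \<in> carrier_mat a b \<Longrightarrow> A - 0\<^sub>m a b = (A :: real mat)"
  by (intro eq_matI) auto

lemma span_factor:
  fixes q M :: "real mat"
  assumes q: "q \<in> carrier_mat n r" and M: "M \<in> carrier_mat n c"
    and sp: "colspace n q = colspace n M"
  shows "\<exists>C \<in> carrier_mat c r. q = M * C"
proof -
  have ex: "\<exists>x. x \<in> carrier_vec c \<and> M *\<^sub>v x = col q k" if k: "k < r" for k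
  proof -
    have "col q k \<in> set (cols q)" using q k by (auto simp: cols_def)
    hence "col q k \<in> colspace n q"
    proof -
      interpret vec_space "TYPE(real)" n .
      have "set (cols q) \<subseteq> carrier_vec n" using q by (auto simp: cols_def)
      from in_own_span[OF this] \<open>col q k \<in> set (cols q)\<close>
      show ?thesis unfolding vec_space.col_space_def by auto
    qed
    hence "col q k \<in> colspace n M" using sp by simp
    thus ?thesis using vec_space.col_space_eq[OF M] M by auto
  qed
  define x where "x = (\<lambda>k. SOME x. x \<in> carrier_vec c \<and> M *\<^sub>v x = col q k)"
  have x: "x k \<in> carrier_vec c \<and> M *\<^sub>v x k = col q k" if "k < r" for k
    unfolding x_def using someI_ex[OF ex[OF that]] .
  define C where "C = mat c r (\<lambda>(i,k). x k $ i)"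
  have C: "C \<in> carrier_mat c r" unfolding C_def by auto
  have colC: "col C k = x k" if "k < r" for k
    using x[OF that] that unfolding C_def by (auto simp: col_def)
  have "q = M * C"
  proof (rule eq_matI)
    fix i k assume i: "i < dim_row (M * C)" and k: "k < dim_col (M * C)"
    hence i': "i < n" and k': "k < r" using M C by auto
    have "(M * C) $$ (i,k) = row M i \<bullet> x k" using i' k' M C colC[OF k'] by auto
    also have "\<dots> = (M *\<^sub>v x k) $ i" using i' M by auto
    also have "\<dots> = q $$ (i,k)" using x[OF k'] i' k' q by auto
    finally show "q $$ (i,k) = (M * C) $$ (i,k)" by simp
  qed (use q M C in auto)
  thus ?thesis using C by auto
qed

lemma tz:
  fixes X Y :: "real mat"
  assumes X: "X \<in> carrier_mat n a" and Y: "Y \<in> carrier_mat n b" and h: "X\<^sup>T * Y = 0\<^sub>m a b"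
  shows "Y\<^sup>T * X = 0\<^sub>m b a"
proof -
  have "Y\<^sup>T * X = (X\<^sup>T * Y)\<^sup>T" using X Y by (simp add: transpose_mult)
  thus ?thesis using h by simp
qed

lemma fac0:
  fixes X M C :: "real mat"
  assumes X: "X \<in> carrier_mat n a" and M: "M \<in> carrier_mat n c" and C: "C \<in> carrier_mat c r"
    and h: "X\<^sup>T * M = 0\<^sub>m a c"
  shows "X\<^sup>T * (M * C) = 0\<^sub>m a r"
proof -
  have "X\<^sup>T * (M * C) = (X\<^sup>T * M) * C" using X M C by (simp add: assoc_mult_mat)
  thus ?thesis using h C by simp
qed

lemma proj0:
  fixes Y P Q :: "real mat"
  assumes Y: "Y \<in> carrier_mat n a" and P: "P \<in> carrier_mat n n" and Q: "Q \<in> carrier_mat n c"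
    and h: "Y\<^sup>T * P = Y\<^sup>T"
  shows "Y\<^sup>T * ((1\<^sub>m n - P) * Q) = 0\<^sub>m a c"
proof -
  have "Y\<^sup>T * (1\<^sub>m n - P) = Y\<^sup>T * 1\<^sub>m n - Y\<^sup>T * P" using mult_minus_distrib_mat[OF trc[OF Y] one_carrier_mat P] by simp
  also have "\<dots> = 0\<^sub>m a n" using h Y by simp
  finally have e: "Y\<^sup>T * (1\<^sub>m n - P) = 0\<^sub>m a n" .
  have "Y\<^sup>T * ((1\<^sub>m n - P) * Q) = (Y\<^sup>T * (1\<^sub>m n - P)) * Q"
    using assoc_mult_mat[OF trc[OF Y] minus_carrier_mat[OF P] Q] by simp
  thus ?thesis using e Q by simp
qed

lemma proj_id:
  fixes Y P Q :: "real mat"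
  assumes Y: "Y \<in> carrier_mat n a" and P: "P \<in> carrier_mat n n" and Q: "Q \<in> carrier_mat n c"
    and h: "Y\<^sup>T * P = 0\<^sub>m a n"
  shows "Y\<^sup>T * ((1\<^sub>m n - P) * Q) = Y\<^sup>T * Q"
proof -
  have "Y\<^sup>T * (1\<^sub>m n - P) = Y\<^sup>T * 1\<^sub>m n - Y\<^sup>T * P" using mult_minus_distrib_mat[OF trc[OF Y] one_carrier_mat P] by simp
  also have "\<dots> = Y\<^sup>T" using h Y minus_zero_mat'[OF trc[OF Y]] by simp
  finally have e: "Y\<^sup>T * (1\<^sub>m n - P) = Y\<^sup>T" .
  have "Y\<^sup>T * ((1\<^sub>m n - P) * Q) = (Y\<^sup>T * (1\<^sub>m n - P)) * Q"
    using assoc_mult_mat[OF trc[OF Y] minus_carrier_mat[OF P] Q] by simp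
  thus ?thesis using e by simp
qed

lemma addproj0:
  fixes Y P X K :: "real mat"
  assumes Y: "Y \<in> carrier_mat n a" and P: "P \<in> carrier_mat n n" and X: "X \<in> carrier_mat n b"
    and h1: "Y\<^sup>T * P = K" and h2: "Y\<^sup>T * X = 0\<^sub>m a b"
  shows "Y\<^sup>T * (P + X * X\<^sup>T) = K"
proof -
  have "Y\<^sup>T * (P + X * X\<^sup>T) = Y\<^sup>T * P + Y\<^sup>T * (X * X\<^sup>T)" using mult_add_distrib_mat[OF trc[OF Y] P mult_carrier_mat[OF X trc[OF X]]] by simp
  also have "Y\<^sup>T * (X * X\<^sup>T) = (Y\<^sup>T * X) * X\<^sup>T" using Y X by (simp add: assoc_mult_mat)
  also have "\<dots> = 0\<^sub>m a n" using h2 X by simp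
  finally show ?thesis using h1 right_add_zero_mat[OF mult_carrier_mat[OF trc[OF Y] P]] by simp
qed

lemma addprojself:
  fixes P X :: "real mat"
  assumes P: "P \<in> carrier_mat n n" and X: "X \<in> carrier_mat n b"
    and h1: "X\<^sup>T * P = 0\<^sub>m b n" and h2: "X\<^sup>T * X = 1\<^sub>m b"
  shows "X\<^sup>T * (P + X * X\<^sup>T) = X\<^sup>T"
proof -
  have "X\<^sup>T * (P + X * X\<^sup>T) = X\<^sup>T * P + X\<^sup>T * (X * X\<^sup>T)" using mult_add_distrib_mat[OF trc[OF X] P mult_carrier_mat[OF X trc[OF X]]] by simp
  also have "X\<^sup>T * (X * X\<^sup>T) = (X\<^sup>T * X) * X\<^sup>T" using X by (simp add: assoc_mult_mat)
  also have "\<dots> = X\<^sup>T" using h2 X by simp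
  finally show ?thesis using h1 X by simp
qed

lemma R2: fixes a v x p :: "real mat"
  assumes "a \<in> carrier_mat n k" "v \<in> carrier_mat n k" "x \<in> carrier_mat n k" "p \<in> carrier_mat n k"
  shows "(a - v) - (p + x) = a - x - v - p"
  using assms by (intro eq_matI) auto

lemma R3: fixes a s x y z :: "real mat"
  assumes "a \<in> carrier_mat n k" "s \<in> carrier_mat n k" "x \<in> carrier_mat n k" "y \<in> carrier_mat n k"
    "z \<in> carrier_mat n k"
  shows "(a - s) - (x + y + z) = a - z - s - (x + y)"
  using assms by (intro eq_matI) auto

lemma add_minus_cancel': "a \<in> carrier_mat k l \<Longrightarrow> x \<in> carrier_mat k l \<Longrightarrow> a + x - a = (x :: real mat)"
  by (intro eq_matI) auto


locale L =
  fixes A W vk vkm1 ak bk :: "real mat"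
    and n m p :: nat
    and q qt beta P :: "nat \<Rightarrow> real mat"
    and r :: "nat \<Rightarrow> nat"
  assumes A: "A \<in> carrier_mat n n" and A_sym: "A\<^sup>T = A"
    and W: "W \<in> carrier_mat n m" and W_orth: "W\<^sup>T * W = 1\<^sub>m m"
    and vk: "vk \<in> carrier_mat n p" and vkm1: "vkm1 \<in> carrier_mat n p"
    and ak: "ak \<in> carrier_mat p p" and bk: "bk \<in> carrier_mat p p"
    and q_dim: "\<And>j. j \<ge> 1 \<Longrightarrow> q j \<in> carrier_mat n (r j)"
    and beta1_dim: "beta 1 \<in> carrier_mat (r 1) p"
    and beta_dim: "\<And>j. j \<ge> 2 \<Longrightarrow> beta j \<in> carrier_mat (r j) (r (j - 1))"
    and qt1: "qt 1 = A * vk - vk * ak - vkm1 * bk\<^sup>T"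
    and qt2: "qt 2 = A * q 1 - vk * (beta 1)\<^sup>T"
    and qtj: "\<And>j. j \<ge> 3 \<Longrightarrow> qt j = A * q (j - 1) - q (j - 2) * (beta (j - 1))\<^sup>T"
    and P1: "P 1 = W * W\<^sup>T"
    and P2: "P 2 = P 1 + q 1 * (q 1)\<^sup>T"
    and Pj: "\<And>j. j \<ge> 3 \<Longrightarrow> P j = P 2 + q (j - 1) * (q (j - 1))\<^sup>T"
    and step: "\<And>j. j \<ge> 1 \<Longrightarrow> q j * beta j = (1\<^sub>m n - P j) * qt j"
    and q_orthonormal: "\<And>j. j \<ge> 1 \<Longrightarrow> (q j)\<^sup>T * q j = 1\<^sub>m (r j)"
    and q_span: "\<And>j. j \<ge> 1 \<Longrightarrow> colspace n (q j) = colspace n ((1\<^sub>m n - P j) * qt j)"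
    and beta_full_row_rank: "\<And>j. j \<ge> 1 \<Longrightarrow> mrank (beta j) = r j"
begin

definition c :: "nat \<Rightarrow> nat" where "c j = (if j = 0 then p else r j)"

lemmas intros_c = mult_carrier_mat minus_carrier_mat add_carrier_mat trc one_carrier_mat zero_carrier_mat

lemma qc: "1 \<le> j \<Longrightarrow> q j \<in> carrier_mat n (r j)" using q_dim by simp
lemma qTc: "1 \<le> j \<Longrightarrow> (q j)\<^sup>T \<in> carrier_mat (r j) n" using q_dim by simp
lemma bc: "1 \<le> j \<Longrightarrow> beta j \<in> carrier_mat (r j) (c (j-1))"
  using beta1_dim beta_dim[of j] by (cases "j = 1") (auto simp: c_def)
lemma bTc: "1 \<le> j \<Longrightarrow> (beta j)\<^sup>T \<in> carrier_mat (c (j-1)) (r j)"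
  using bc by simp
lemma qtc: "1 \<le> j \<Longrightarrow> qt j \<in> carrier_mat n (c (j-1))"
proof -
  assume j: "1 \<le> j"
  consider "j = 1" | "j = 2" | "j \<ge> 3" using j by linarith
  thus ?thesis
  proof cases
    case 1
    have "qt 1 \<in> carrier_mat n p" unfolding qt1 using A vk ak vkm1 bk by (auto intro!: intros_c)
    thus ?thesis using 1 by (simp add: c_def)
  next
    case 2
    have "qt 2 \<in> carrier_mat n (r 1)" unfolding qt2 using A vk qc[of 1] bTc[of 1] by (auto simp: c_def intro!: intros_c)
    thus ?thesis using 2 by (simp add: c_def)
  next
    case 3
    have a: "q (j-1) \<in> carrier_mat n (r (j-1))" "q (j-2) \<in> carrier_mat n (r (j-2))"
      using qc 3 by auto
    have b: "(beta (j-1))\<^sup>T \<in> carrier_mat (r (j-2)) (r (j-1))"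
    proof -
      have e: "j - 1 - 1 = j - 2" by simp
      have "(beta (j-1))\<^sup>T \<in> carrier_mat (c (j-1-1)) (r (j-1))" using bTc[of "j-1"] 3 by simp
      thus ?thesis unfolding e using 3 by (simp add: c_def)
    qed
    have "qt j \<in> carrier_mat n (r (j-1))" unfolding qtj[OF 3]
      by (rule minus_carrier_mat[OF mult_carrier_mat[OF a(2) b]])
    thus ?thesis using 3 by (simp add: c_def)
  qed
qed
lemma WT: "W\<^sup>T \<in> carrier_mat m n" using W by simp
lemma P1c: "P 1 \<in> carrier_mat n n" unfolding P1 using W by (auto intro!: intros_c)
lemma P2c: "P 2 \<in> carrier_mat n n" unfolding P2 using P1c qc[of 1] by (auto intro!: intros_c)
lemma Pc: "1 \<le> j \<Longrightarrow> P j \<in> carrier_mat n n"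
proof -
  assume j: "1 \<le> j"
  consider "j = 1" | "j = 2" | "j \<ge> 3" using j by linarith
  thus ?thesis
  proof cases
    case 3
    have "q (j-1) \<in> carrier_mat n (r (j-1))" using qc 3 by simp
    thus ?thesis unfolding Pj[OF 3] using P2c by (auto intro!: intros_c)
  qed (use P1c P2c in auto)
qed

lemma rearr: fixes X Y Z :: "real mat"
  assumes "Y \<in> carrier_mat a b" "Z \<in> carrier_mat a b" "X = Y - Z" shows "Y = X + Z"
  using assms by (intro eq_matI) auto

lemma step': assumes j: "1 \<le> j" shows "qt j = q j * beta j + P j * qt j"
proof -
  have "q j * beta j = 1\<^sub>m n * qt j - P j * qt j"
    using step[OF j] minus_mult_distrib_mat[OF one_carrier_mat Pc[OF j] qtc[OF j]] by simp
  also have "1\<^sub>m n * qt j = qt j" using qtc[OF j] by simp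
  finally show ?thesis using rearr[OF qtc[OF j] mult_carrier_mat[OF Pc[OF j] qtc[OF j]]] by simp
qed

lemma Aq_eq: assumes i: "2 \<le> i" shows "A * q i = qt (i+1) + q (i-1) * (beta i)\<^sup>T"
proof -
  have e: "qt (i+1) = A * q i - q (i-1) * (beta i)\<^sup>T" using qtj[of "i+1"] i by simp
  have b: "(beta i)\<^sup>T \<in> carrier_mat (r (i-1)) (r i)" using bTc[of i] i by (simp add: c_def)
  show ?thesis
    by (rule rearr[OF mult_carrier_mat[OF A qc] mult_carrier_mat[OF qc b] e]) (use i in auto)
qed

lemma Aq1: "A * q 1 = qt 2 + vk * (beta 1)\<^sup>T"
  by (rule rearr[OF mult_carrier_mat[OF A qc] mult_carrier_mat[OF vk] qt2]) (use bTc[of 1] in \<open>auto simp: c_def\<close>)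

lemma qTA: "1 \<le> i \<Longrightarrow> (q i)\<^sup>T * A = (A * q i)\<^sup>T"
  using transpose_mult[OF A qc[of i]] A_sym by simp

lemma WP1: "W\<^sup>T * P 1 = W\<^sup>T"
proof -
  have "W\<^sup>T * P 1 = (W\<^sup>T * W) * W\<^sup>T" unfolding P1 using W WT by (simp add: assoc_mult_mat)
  thus ?thesis using W_orth W by simp
qed

lemma YP1: assumes Y: "Y \<in> carrier_mat n a" and h: "W\<^sup>T * Y = 0\<^sub>m m a"
  shows "Y\<^sup>T * P 1 = 0\<^sub>m a n"
proof -
  have YT: "Y\<^sup>T \<in> carrier_mat a n" using Y by simp
  have "Y\<^sup>T * P 1 = (Y\<^sup>T * W) * W\<^sup>T" unfolding P1 using W WT YT by (simp add: assoc_mult_mat)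
  also have "Y\<^sup>T * W = 0\<^sub>m a m" by (rule tz[OF W Y h])
  finally show ?thesis using WT by simp
qed

lemma WP2: "W\<^sup>T * q 1 = 0\<^sub>m m (r 1) \<Longrightarrow> W\<^sup>T * P 2 = W\<^sup>T"
  unfolding P2 by (rule addproj0[OF W P1c qc WP1]) auto

lemma YP2: assumes Y: "Y \<in> carrier_mat n a" and h: "W\<^sup>T * Y = 0\<^sub>m m a"
  and h2: "(q 1)\<^sup>T * Y = 0\<^sub>m (r 1) a"
  shows "Y\<^sup>T * P 2 = 0\<^sub>m a n"
  unfolding P2 by (rule addproj0[OF Y P1c qc YP1[OF Y h] tz[OF qc Y h2]]) auto

lemma q1P2: "W\<^sup>T * q 1 = 0\<^sub>m m (r 1) \<Longrightarrow> (q 1)\<^sup>T * P 2 = (q 1)\<^sup>T"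
  unfolding P2 by (rule addprojself[OF P1c qc YP1[OF qc] q_orthonormal]) auto

lemma YPj: assumes j: "3 \<le> j" and Y: "Y \<in> carrier_mat n a" and h: "Y\<^sup>T * P 2 = K"
  and h2: "(q (j-1))\<^sup>T * Y = 0\<^sub>m (r (j-1)) a"
  shows "Y\<^sup>T * P j = K"
  unfolding Pj[OF j] by (rule addproj0[OF Y P2c qc h tz[OF qc Y h2]]) (use j in auto)

lemma qPj: assumes j: "3 \<le> j" and h: "(q (j-1))\<^sup>T * P 2 = 0\<^sub>m (r (j-1)) n"
  shows "(q (j-1))\<^sup>T * P j = (q (j-1))\<^sup>T"
  unfolding Pj[OF j] by (rule addprojself[OF P2c qc h q_orthonormal]) (use j in auto)

lemma qAq: assumes i: "2 \<le> i" and il: "i < l" and hW: "W\<^sup>T * q l = 0\<^sub>m m (r l)"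
  and h1: "(q 1)\<^sup>T * q l = 0\<^sub>m (r 1) (r l)" and hi: "(q i)\<^sup>T * q l = 0\<^sub>m (r i) (r l)"
  and hi1: "(q (i-1))\<^sup>T * q l = 0\<^sub>m (r (i-1)) (r l)"
  and hi2: "i+1 < l \<Longrightarrow> (q (i+1))\<^sup>T * q l = 0\<^sub>m (r (i+1)) (r l)"
  shows "(q l)\<^sup>T * (A * q i) = (if l = i+1 then beta l else 0\<^sub>m (r l) (r i))"
proof -
  have l1: "1 \<le> l" using i il by simp
  have Qc: "(q l)\<^sup>T \<in> carrier_mat (r l) n" using qTc[OF l1] .
  have ql: "q l \<in> carrier_mat n (r l)" using qc[OF l1] .
  have qi: "q i \<in> carrier_mat n (r i)" using qc i by simp
  have qi1: "q (i-1) \<in> carrier_mat n (r (i-1))" using qc i by simp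
  have qi2: "q (i+1) \<in> carrier_mat n (r (i+1))" using qc i by simp
  have bi: "(beta i)\<^sup>T \<in> carrier_mat (r (i-1)) (r i)" using bTc[of i] i by (simp add: c_def)
  have bi2: "beta (i+1) \<in> carrier_mat (r (i+1)) (r i)" using bc[of "i+1"] i by (simp add: c_def)
  have qti: "qt (i+1) \<in> carrier_mat n (r i)" using qtc[of "i+1"] i by (simp add: c_def)
  have Pi: "P (i+1) \<in> carrier_mat n n" using Pc[of "i+1"] by simp
  have qlP2: "(q l)\<^sup>T * P 2 = 0\<^sub>m (r l) n" by (rule YP2[OF ql hW h1])
  have qlP: "(q l)\<^sup>T * P (i+1) = 0\<^sub>m (r l) n"
    by (rule YPj[of "i+1", OF _ ql qlP2]) (use i hi in auto)
  have z1: "(q l)\<^sup>T * q (i-1) = 0\<^sub>m (r l) (r (i-1))" by (rule tz[OF qi1 ql hi1])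
  have "(q l)\<^sup>T * (A * q i) = (q l)\<^sup>T * (qt (i+1) + q (i-1) * (beta i)\<^sup>T)" using Aq_eq[OF i] by simp
  also have "\<dots> = (q l)\<^sup>T * qt (i+1) + (q l)\<^sup>T * (q (i-1) * (beta i)\<^sup>T)"
    by (rule mult_add_distrib_mat[OF Qc qti mult_carrier_mat[OF qi1 bi]])
  also have "(q l)\<^sup>T * (q (i-1) * (beta i)\<^sup>T) = ((q l)\<^sup>T * q (i-1)) * (beta i)\<^sup>T"
    using Qc qi1 bi by (simp add: assoc_mult_mat)
  also have "\<dots> = 0\<^sub>m (r l) (r i)" using z1 bi by simp
  also have "(q l)\<^sup>T * qt (i+1) = (q l)\<^sup>T * (q (i+1) * beta (i+1) + P (i+1) * qt (i+1))"
    using step'[of "i+1"] by simp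
  also have "\<dots> = (q l)\<^sup>T * (q (i+1) * beta (i+1)) + (q l)\<^sup>T * (P (i+1) * qt (i+1))"
    by (rule mult_add_distrib_mat[OF Qc mult_carrier_mat[OF qi2 bi2] mult_carrier_mat[OF Pi qti]])
  also have "(q l)\<^sup>T * (P (i+1) * qt (i+1)) = ((q l)\<^sup>T * P (i+1)) * qt (i+1)"
    using Qc Pi qti by (simp add: assoc_mult_mat)
  also have "\<dots> = 0\<^sub>m (r l) (r i)" using qlP qti by simp
  also have "(q l)\<^sup>T * (q (i+1) * beta (i+1)) = ((q l)\<^sup>T * q (i+1)) * beta (i+1)"
    using Qc qi2 bi2 by (simp add: assoc_mult_mat)
  finally have e: "(q l)\<^sup>T * (A * q i) = ((q l)\<^sup>T * q (i+1)) * beta (i+1) + 0\<^sub>m (r l) (r i) + 0\<^sub>m (r l) (r i)" .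
  show ?thesis
  proof (cases "l = i+1")
    case True
    have "(q l)\<^sup>T * q (i+1) = 1\<^sub>m (r l)" using q_orthonormal[OF l1] True by simp
    thus ?thesis using e True bi2 by simp
  next
    case False
    hence "(q l)\<^sup>T * q (i+1) = 0\<^sub>m (r l) (r (i+1))" using tz[OF qi2 ql hi2] il by simp
    thus ?thesis using e False bi2 by simp
  qed
qed

lemma qiqt: assumes i: "2 \<le> i" and il: "i + 1 \<le> l" and hW: "W\<^sup>T * q l = 0\<^sub>m m (r l)"
  and h1: "(q 1)\<^sup>T * q l = 0\<^sub>m (r 1) (r l)" and hi: "(q i)\<^sup>T * q l = 0\<^sub>m (r i) (r l)"
  and hi1: "(q (i-1))\<^sup>T * q l = 0\<^sub>m (r (i-1)) (r l)"
  and hi2: "i+1 < l \<Longrightarrow> (q (i+1))\<^sup>T * q l = 0\<^sub>m (r (i+1)) (r l)"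
  and hj2: "i + 1 < l \<Longrightarrow> (q i)\<^sup>T * q (l-1) = 0\<^sub>m (r i) (r (l-1))"
  shows "(q i)\<^sup>T * qt (l+1) = 0\<^sub>m (r i) (r l)"
proof -
  have l1: "1 \<le> l" "3 \<le> l+1" using i il by auto
  have e: "qt (l+1) = A * q l - q (l-1) * (beta l)\<^sup>T" using qtj[OF l1(2)] by simp
  have Qc: "(q l)\<^sup>T \<in> carrier_mat (r l) n" using qTc[OF l1(1)] .
  have ql: "q l \<in> carrier_mat n (r l)" using qc[OF l1(1)] .
  have qi: "q i \<in> carrier_mat n (r i)" using qc i by simp
  have qiT: "(q i)\<^sup>T \<in> carrier_mat (r i) n" using qTc i by simp
  have ql1: "q (l-1) \<in> carrier_mat n (r (l-1))" using qc i il by simp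
  have bl: "(beta l)\<^sup>T \<in> carrier_mat (r (l-1)) (r l)" using bTc[of l] i il by (simp add: c_def)
  have Aqi: "A * q i \<in> carrier_mat n (r i)" using A qi by simp
  have Aql: "A * q l \<in> carrier_mat n (r l)" using A ql by simp
  have t: "(q i)\<^sup>T * (A * q l) = ((q l)\<^sup>T * (A * q i))\<^sup>T"
  proof -
    have "(q i)\<^sup>T * (A * q l) = ((q i)\<^sup>T * A) * q l" using qiT A ql by (simp add: assoc_mult_mat)
    also have "\<dots> = (A * q i)\<^sup>T * q l" using qTA i by simp
    also have "\<dots> = ((q l)\<^sup>T * (A * q i))\<^sup>T" using transpose_mult[OF Qc Aqi] by simp
    finally show ?thesis .
  qed
  have qAq': "(q l)\<^sup>T * (A * q i) = (if l = i+1 then beta l else 0\<^sub>m (r l) (r i))"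
    by (rule qAq[OF i _ hW h1 hi hi1 hi2]) (use il in auto)
  have "(q i)\<^sup>T * qt (l+1) = (q i)\<^sup>T * (A * q l) - (q i)\<^sup>T * (q (l-1) * (beta l)\<^sup>T)"
    unfolding e by (rule mult_minus_distrib_mat[OF qiT Aql mult_carrier_mat[OF ql1 bl]])
  also have "(q i)\<^sup>T * (q (l-1) * (beta l)\<^sup>T) = ((q i)\<^sup>T * q (l-1)) * (beta l)\<^sup>T"
    using qiT ql1 bl by (simp add: assoc_mult_mat)
  finally have f: "(q i)\<^sup>T * qt (l+1) = ((q l)\<^sup>T * (A * q i))\<^sup>T - ((q i)\<^sup>T * q (l-1)) * (beta l)\<^sup>T"
    using t by simp
  show ?thesis
  proof (cases "l = i+1")
    case True
    have "(q i)\<^sup>T * q (l-1) = 1\<^sub>m (r i)" using q_orthonormal[of i] True i by simp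
    thus ?thesis using f qAq' True bl by simp
  next
    case False
    hence "(q i)\<^sup>T * q (l-1) = 0\<^sub>m (r i) (r (l-1))" using hj2 il by simp
    thus ?thesis using f qAq' False bl by simp
  qed
qed

lemma orth: "1 \<le> j \<Longrightarrow> W\<^sup>T * q j = 0\<^sub>m m (r j) \<and>
   (\<forall>i. 1 \<le> i \<longrightarrow> i < j \<longrightarrow> (q i)\<^sup>T * q j = 0\<^sub>m (r i) (r j))"
proof (induction j rule: less_induct)
  case (less j)
  have j: "1 \<le> j" by fact
  have IHW: "W\<^sup>T * q l = 0\<^sub>m m (r l)" if "1 \<le> l" "l < j" for l using less.IH that by blast
  have IHq: "(q i)\<^sup>T * q l = 0\<^sub>m (r i) (r l)" if "1 \<le> i" "i < l" "l < j" for i l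
    using less.IH that by auto
  have IHq': "(q l)\<^sup>T * q i = 0\<^sub>m (r l) (r i)" if "1 \<le> i" "i < l" "l < j" for i l
    using tz[OF qc qc IHq[OF that]] that by auto
  define M where "M = (1\<^sub>m n - P j) * qt j"
  have Mc: "M \<in> carrier_mat n (c (j-1))" unfolding M_def
    using Pc[OF j] qtc[OF j] by (auto intro!: intros_c)
  obtain C where C: "C \<in> carrier_mat (c (j-1)) (r j)" and qM: "q j = M * C"
    using span_factor[OF qc[OF j] Mc] q_span[OF j] unfolding M_def by auto
  have kill: "Y\<^sup>T * q j = 0\<^sub>m a (r j)" if Y: "Y \<in> carrier_mat n a" and h: "Y\<^sup>T * M = 0\<^sub>m a (c (j-1))" for Y a
    unfolding qM by (rule fac0[OF Y Mc C h])
  have killP: "Y\<^sup>T * q j = 0\<^sub>m a (r j)" if Y: "Y \<in> carrier_mat n a" and h: "Y\<^sup>T * P j = Y\<^sup>T" for Y a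
    by (rule kill[OF Y], unfold M_def, rule proj0[OF Y Pc[OF j] qtc[OF j] h])
  consider "j = 1" | "j = 2" | "j \<ge> 3" using j by linarith
  note jc = this
  have WPj: "W\<^sup>T * P j = W\<^sup>T"
  proof (cases rule: jc)
    case 1 thus ?thesis using WP1 by simp
  next
    case 2 thus ?thesis using WP2[OF IHW[of 1]] by simp
  next
    case 3
    show ?thesis
      by (rule YPj[OF 3 W WP2[OF IHW[of 1]] tz[OF W qc IHW[of "j-1"]]]) (use 3 in auto)
  qed
  have part1: "W\<^sup>T * q j = 0\<^sub>m m (r j)" by (rule killP[OF W WPj])
  have part2: "(q i)\<^sup>T * q j = 0\<^sub>m (r i) (r j)" if i: "1 \<le> i" "i < j" for i
  proof -
    consider "i = 1" | "i \<ge> 2" "i = j - 1" | "i \<ge> 2" "i + 1 < j" using i by linarith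
    thus ?thesis
    proof cases
      case 1
      have "(q 1)\<^sup>T * P j = (q 1)\<^sup>T"
      proof (cases rule: jc)
        case 1 thus ?thesis using i \<open>i = 1\<close> by simp
      next
        case 2 thus ?thesis using q1P2[OF IHW[of 1]] by simp
      next
        case 3
        show ?thesis
          by (rule YPj[OF 3 qc q1P2[OF IHW[of 1]] IHq'[of 1 "j-1"]]) (use 3 in auto)
      qed
      thus ?thesis using killP[OF qc[of 1]] 1 by simp
    next
      case 2
      have j3: "3 \<le> j" using 2 by simp
      have "(q i)\<^sup>T * P 2 = 0\<^sub>m (r i) n"
        by (rule YP2[OF qc IHW[of i] IHq[of 1 i]]) (use 2 in auto)
      hence "(q (j-1))\<^sup>T * P j = (q (j-1))\<^sup>T" using qPj[OF j3] 2 by simp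
      thus ?thesis using killP[OF qc[of "j-1"]] 2 by simp
    next
      case 3
      have j3: "3 \<le> j" using 3 by simp
      have P2z: "(q i)\<^sup>T * P 2 = 0\<^sub>m (r i) n"
        by (rule YP2[OF qc IHW[of i] IHq[of 1 i]]) (use 3 in auto)
      have Pjz: "(q i)\<^sup>T * P j = 0\<^sub>m (r i) n"
        by (rule YPj[OF j3 qc P2z IHq'[of i "j-1"]]) (use 3 in auto)
      have qtz: "(q i)\<^sup>T * qt (j - 1 + 1) = 0\<^sub>m (r i) (r (j-1))"
        by (rule qiqt[OF 3(1) _ IHW IHq IHq IHq IHq IHq]) (use 3 in auto)
      have "(q i)\<^sup>T * M = (q i)\<^sup>T * qt j"
        unfolding M_def by (rule proj_id[OF qc Pc[OF j] qtc[OF j] Pjz]) (use 3 in auto)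
      also have "\<dots> = 0\<^sub>m (r i) (c (j-1))" using qtz 3 by (simp add: c_def)
      finally show ?thesis using kill[OF qc[of i]] 3 by simp
    qed
  qed
  show ?case using part1 part2 by blast
qed

lemma stepm: assumes j: "1 \<le> j" shows "q j * beta j = qt j - P j * qt j"
  using step[OF j] minus_mult_distrib_mat[OF one_carrier_mat Pc[OF j] qtc[OF j]] qtc[OF j] by simp

lemma main1: "q 1 * beta 1 = A * vk - vk * ak - vkm1 * bk\<^sup>T - P 1 * (A * vk - vk * ak - vkm1 * bk\<^sup>T)"
  using stepm[of 1] qt1 by simp

lemma main2: "q 2 * beta 2 = A * q 1 - q 1 * ((q 1)\<^sup>T * (A * q 1 - vk * (beta 1)\<^sup>T))
            - vk * (beta 1)\<^sup>T - P 1 * (A * q 1 - vk * (beta 1)\<^sup>T)"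
proof -
  have q1: "q 1 \<in> carrier_mat n (r 1)" "(q 1)\<^sup>T \<in> carrier_mat (r 1) n" using qc qTc by auto
  have qt: "qt 2 \<in> carrier_mat n (r 1)" using qtc[of 2] by (simp add: c_def)
  have b1: "vk * (beta 1)\<^sup>T \<in> carrier_mat n (r 1)" using vk bTc[of 1] by (auto simp: c_def)
  have Aq: "A * q 1 \<in> carrier_mat n (r 1)" using A q1 by auto
  have "P 2 * qt 2 = P 1 * qt 2 + (q 1 * (q 1)\<^sup>T) * qt 2" unfolding P2
    by (rule add_mult_distrib_mat[OF P1c mult_carrier_mat[OF q1] qt])
  also have "(q 1 * (q 1)\<^sup>T) * qt 2 = q 1 * ((q 1)\<^sup>T * qt 2)" using q1 qt by (simp add: assoc_mult_mat)
  finally have e: "P 2 * qt 2 = P 1 * qt 2 + q 1 * ((q 1)\<^sup>T * qt 2)" .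
  have "q 2 * beta 2 = qt 2 - (P 1 * qt 2 + q 1 * ((q 1)\<^sup>T * qt 2))" using stepm[of 2] e by simp
  also have "\<dots> = A * q 1 - q 1 * ((q 1)\<^sup>T * qt 2) - vk * (beta 1)\<^sup>T - P 1 * qt 2"
    using R2[OF Aq b1 mult_carrier_mat[OF q1(1) mult_carrier_mat[OF q1(2) qt]] mult_carrier_mat[OF P1c qt]]
    unfolding qt2 by simp
  finally show ?thesis unfolding qt2 .
qed

lemma main3: assumes j: "3 \<le> j"
  shows "q j * beta j = A * q (j - 1) - q (j - 1) * ((q (j - 1))\<^sup>T * A * q (j - 1))
            - q (j - 2) * (beta (j - 1))\<^sup>T
            - (P 1 * A * q (j - 1) + q 1 * beta 1 * vk\<^sup>T * q (j - 1))"
proof -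
  define l where "l = j - 1"
  have jl: "j = l + 1" "j - 2 = l - 1" "j - 1 = l" using j unfolding l_def by auto
  have l2: "2 \<le> l" using j unfolding l_def by auto
  have ql: "q l \<in> carrier_mat n (r l)" "(q l)\<^sup>T \<in> carrier_mat (r l) n" using qc qTc l2 by auto
  have ql1: "q (l-1) \<in> carrier_mat n (r (l-1))" using qc l2 by auto
  have q1: "q 1 \<in> carrier_mat n (r 1)" "(q 1)\<^sup>T \<in> carrier_mat (r 1) n" using qc qTc by auto
  have bl: "(beta l)\<^sup>T \<in> carrier_mat (r (l-1)) (r l)" using bTc[of l] l2 by (simp add: c_def)
  have b1: "beta 1 \<in> carrier_mat (r 1) p" "(beta 1)\<^sup>T \<in> carrier_mat p (r 1)" using bc[of 1] by (auto simp: c_def)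
  have vkT: "vk\<^sup>T \<in> carrier_mat p n" using vk by simp
  have qt: "qt j \<in> carrier_mat n (r l)" using qtc[of j] j jl by (simp add: c_def)
  have qt2c: "qt 2 \<in> carrier_mat n (r 1)" using qtc[of 2] by (simp add: c_def)
  have Aql: "A * q l \<in> carrier_mat n (r l)" using A ql by auto
  have sl: "q (l-1) * (beta l)\<^sup>T \<in> carrier_mat n (r l)" using ql1 bl by auto
  have qte: "qt j = A * q l - q (l-1) * (beta l)\<^sup>T" using qtj[OF j] jl by simp
  have O: "W\<^sup>T * q i = 0\<^sub>m m (r i)" "\<And>i'. 1 \<le> i' \<Longrightarrow> i' < i \<Longrightarrow> (q i')\<^sup>T * q i = 0\<^sub>m (r i') (r i)"
    if "1 \<le> i" for i using orth[OF that] by auto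
  have "P 1 * qt j = P 1 * (A * q l) - P 1 * (q (l-1) * (beta l)\<^sup>T)"
    unfolding qte by (rule mult_minus_distrib_mat[OF P1c Aql sl])
  also have "P 1 * (q (l-1) * (beta l)\<^sup>T) = W * ((W\<^sup>T * q (l-1)) * (beta l)\<^sup>T)"
    unfolding P1 by (simp only: assoc_mult_mat[OF W WT mult_carrier_mat[OF ql1 bl]] assoc_mult_mat[OF WT ql1 bl])
  also have "\<dots> = 0\<^sub>m n (r l)" using O(1)[of "l-1"] l2 W bl by simp
  also have "P 1 * (A * q l) = P 1 * A * q l" using P1c A ql by (simp add: assoc_mult_mat)
  finally have eP1: "P 1 * qt j = P 1 * A * q l"
    using minus_zero_mat'[OF mult_carrier_mat[OF P1c Aql]] assoc_mult_mat[OF P1c A ql(1)] by simp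
  have "(q l)\<^sup>T * qt j = (q l)\<^sup>T * (A * q l) - (q l)\<^sup>T * (q (l-1) * (beta l)\<^sup>T)"
    unfolding qte by (rule mult_minus_distrib_mat[OF ql(2) Aql sl])
  also have "(q l)\<^sup>T * (q (l-1) * (beta l)\<^sup>T) = ((q l)\<^sup>T * q (l-1)) * (beta l)\<^sup>T"
    using ql ql1 bl by (simp add: assoc_mult_mat)
  also have "(q l)\<^sup>T * q (l-1) = 0\<^sub>m (r l) (r (l-1))" using tz[OF ql1 ql(1) O(2)[of l "l-1"]] l2 by simp
  also have "(q l)\<^sup>T * (A * q l) = (q l)\<^sup>T * A * q l" using ql A by (simp add: assoc_mult_mat)
  finally have eql: "(q l)\<^sup>T * qt j = (q l)\<^sup>T * A * q l"
    using minus_zero_mat'[OF mult_carrier_mat[OF ql(2) Aql]] assoc_mult_mat[OF ql(2) A ql(1)] bl by simp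
  have qlP2: "(q l)\<^sup>T * P 2 = 0\<^sub>m (r l) n" by (rule YP2[OF ql(1) O(1) O(2)]) (use l2 in auto)
  have "(q l)\<^sup>T * qt 2 = (q l)\<^sup>T * (q 2 * beta 2 + P 2 * qt 2)" using step'[of 2] by simp
  also have "\<dots> = (q l)\<^sup>T * (q 2 * beta 2) + (q l)\<^sup>T * (P 2 * qt 2)"
    by (rule mult_add_distrib_mat[OF ql(2) mult_carrier_mat[OF qc[of 2] bc[of 2]] mult_carrier_mat[OF P2c]])
       (use qt2c in \<open>auto simp: c_def\<close>)
  also have "(q l)\<^sup>T * (P 2 * qt 2) = ((q l)\<^sup>T * P 2) * qt 2" using ql P2c qt2c by (simp add: assoc_mult_mat)
  also have "\<dots> = 0\<^sub>m (r l) (r 1)" using qlP2 qt2c by simp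
  also have "(q l)\<^sup>T * (q 2 * beta 2) = ((q l)\<^sup>T * q 2) * beta 2" using ql qc[of 2] bc[of 2] by (simp add: assoc_mult_mat)
  finally have e2: "(q l)\<^sup>T * qt 2 = ((q l)\<^sup>T * q 2) * beta 2 + 0\<^sub>m (r l) (r 1)" .
  have b2: "beta 2 \<in> carrier_mat (r 2) (r 1)" using bc[of 2] by (simp add: c_def)
  have q1A: "(q 1)\<^sup>T * (A * q l) = ((q l)\<^sup>T * qt 2)\<^sup>T + beta 1 * vk\<^sup>T * q l"
  proof -
    have "(q 1)\<^sup>T * (A * q l) = ((q 1)\<^sup>T * A) * q l" using q1 A ql by (simp add: assoc_mult_mat)
    also have "(q 1)\<^sup>T * A = (qt 2 + vk * (beta 1)\<^sup>T)\<^sup>T" using qTA[of 1] Aq1 by simp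
    also have "\<dots> = (qt 2)\<^sup>T + beta 1 * vk\<^sup>T"
      using transpose_add[OF qt2c mult_carrier_mat[OF vk b1(2)]] transpose_mult[OF vk b1(2)] by simp
    also have "((qt 2)\<^sup>T + beta 1 * vk\<^sup>T) * q l = (qt 2)\<^sup>T * q l + beta 1 * vk\<^sup>T * q l"
      by (rule add_mult_distrib_mat[OF trc[OF qt2c] mult_carrier_mat[OF b1(1) vkT] ql(1)])
    also have "(qt 2)\<^sup>T * q l = ((q l)\<^sup>T * qt 2)\<^sup>T" using transpose_mult[OF ql(2) qt2c] by simp
    finally show ?thesis .
  qed
  have eq1: "(q 1)\<^sup>T * qt j = beta 1 * vk\<^sup>T * q l"
  proof -
    have "(q 1)\<^sup>T * qt j = (q 1)\<^sup>T * (A * q l) - ((q 1)\<^sup>T * q (l-1)) * (beta l)\<^sup>T"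
      unfolding qte using mult_minus_distrib_mat[OF q1(2) Aql sl] q1 ql1 bl by (simp add: assoc_mult_mat)
    also note q1A
    finally have f: "(q 1)\<^sup>T * qt j = ((q l)\<^sup>T * qt 2)\<^sup>T + beta 1 * vk\<^sup>T * q l - ((q 1)\<^sup>T * q (l-1)) * (beta l)\<^sup>T" .
    have X: "beta 1 * vk\<^sup>T * q l \<in> carrier_mat (r 1) (r l)" using b1 vkT ql by auto
    show ?thesis
    proof (cases "l = 2")
      case True
      have a: "(q l)\<^sup>T * q 2 = 1\<^sub>m (r l)" using q_orthonormal[of 2] True by simp
      have b: "(q 1)\<^sup>T * q (l-1) = 1\<^sub>m (r 1)" using q_orthonormal[of 1] True by simp
      have "((q l)\<^sup>T * qt 2)\<^sup>T = (beta l)\<^sup>T" using e2 a b2 True by simp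
      hence "(q 1)\<^sup>T * qt j = (beta l)\<^sup>T + beta 1 * vk\<^sup>T * q l - (beta l)\<^sup>T" using f b bl True by simp
      moreover have "(beta l)\<^sup>T \<in> carrier_mat (r 1) (r l)" using bl True by simp
      ultimately show ?thesis using add_minus_cancel'[OF _ X] by simp
    next
      case False
      have a: "(q l)\<^sup>T * q 2 = 0\<^sub>m (r l) (r 2)" using tz[OF qc[of 2] ql(1) O(2)[of l 2]] False l2 by simp
      have b: "(q 1)\<^sup>T * q (l-1) = 0\<^sub>m (r 1) (r (l-1))" using O(2)[of "l-1" 1] False l2 by simp
      have "((q l)\<^sup>T * qt 2)\<^sup>T = 0\<^sub>m (r 1) (r l)" using e2 a b2 by simp
      thus ?thesis using f b bl X minus_zero_mat'[OF X] by simp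
    qed
  qed
  have "P j * qt j = (P 1 + q 1 * (q 1)\<^sup>T + q l * (q l)\<^sup>T) * qt j" using Pj[OF j] P2 jl by simp
  also have "\<dots> = (P 1 + q 1 * (q 1)\<^sup>T) * qt j + (q l * (q l)\<^sup>T) * qt j"
    by (rule add_mult_distrib_mat[OF add_carrier_mat[OF mult_carrier_mat[OF q1]] mult_carrier_mat[OF ql] qt])
  also have "(P 1 + q 1 * (q 1)\<^sup>T) * qt j = P 1 * qt j + (q 1 * (q 1)\<^sup>T) * qt j"
    by (rule add_mult_distrib_mat[OF P1c mult_carrier_mat[OF q1] qt])
  also have "(q 1 * (q 1)\<^sup>T) * qt j = q 1 * ((q 1)\<^sup>T * qt j)" by (rule assoc_mult_mat[OF q1 qt])
  also have "(q l * (q l)\<^sup>T) * qt j = q l * ((q l)\<^sup>T * qt j)" by (rule assoc_mult_mat[OF ql qt])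
  finally have eP: "P j * qt j = P 1 * A * q l + q 1 * (beta 1 * vk\<^sup>T * q l) + q l * ((q l)\<^sup>T * A * q l)"
    using eP1 eq1 eql by simp
  have "q j * beta j = (A * q l - q (l-1) * (beta l)\<^sup>T) - (P 1 * A * q l + q 1 * (beta 1 * vk\<^sup>T * q l) + q l * ((q l)\<^sup>T * A * q l))"
    using stepm[of j] j eP qte by simp
  also have "\<dots> = A * q l - q l * ((q l)\<^sup>T * A * q l) - q (l-1) * (beta l)\<^sup>T - (P 1 * A * q l + q 1 * (beta 1 * vk\<^sup>T * q l))"
    by (rule R3[OF Aql sl]) (use P1c A ql q1 b1 vkT in auto)
  also have "q 1 * (beta 1 * vk\<^sup>T * q l) = q 1 * beta 1 * vk\<^sup>T * q l"
    by (simp only: assoc_mult_mat[OF q1(1) b1(1) vkT] assoc_mult_mat[OF q1(1) mult_carrier_mat[OF b1(1) vkT] ql(1)])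
  finally show ?thesis using jl by simp
qed

end

theorem theorem4:
  fixes A W vk vkm1 ak bk :: "real mat"
    and n m p :: nat
    and q qt beta P :: "nat \<Rightarrow> real mat"
    and r :: "nat \<Rightarrow> nat"
  assumes A: "A \<in> carrier_mat n n" and A_sym: "A\<^sup>T = A"
    and W: "W \<in> carrier_mat n m" and W_orth: "W\<^sup>T * W = 1\<^sub>m m"
    and vk: "vk \<in> carrier_mat n p" and vkm1: "vkm1 \<in> carrier_mat n p"
    and ak: "ak \<in> carrier_mat p p" and bk: "bk \<in> carrier_mat p p"
    and q_dim: "\<And>j. j \<ge> 1 \<Longrightarrow> q j \<in> carrier_mat n (r j)"
    and beta1_dim: "beta 1 \<in> carrier_mat (r 1) p"
    and beta_dim: "\<And>j. j \<ge> 2 \<Longrightarrow> beta j \<in> carrier_mat (r j) (r (j - 1))"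
    and qt1: "qt 1 = A * vk - vk * ak - vkm1 * bk\<^sup>T"
    and qt2: "qt 2 = A * q 1 - vk * (beta 1)\<^sup>T"
    and qtj: "\<And>j. j \<ge> 3 \<Longrightarrow> qt j = A * q (j - 1) - q (j - 2) * (beta (j - 1))\<^sup>T"
    and P1: "P 1 = W * W\<^sup>T"
    and P2: "P 2 = P 1 + q 1 * (q 1)\<^sup>T"
    and Pj: "\<And>j. j \<ge> 3 \<Longrightarrow> P j = P 2 + q (j - 1) * (q (j - 1))\<^sup>T"
    and step: "\<And>j. j \<ge> 1 \<Longrightarrow> q j * beta j = (1\<^sub>m n - P j) * qt j"
    and q_orthonormal: "\<And>j. j \<ge> 1 \<Longrightarrow> (q j)\<^sup>T * q j = 1\<^sub>m (r j)"
    and q_span: "\<And>j. j \<ge> 1 \<Longrightarrow> colspace n (q j) = colspace n ((1\<^sub>m n - P j) * qt j)"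
    and beta_full_row_rank: "\<And>j. j \<ge> 1 \<Longrightarrow> mrank (beta j) = r j"
  shows "(q 1 * beta 1 = A * vk - vk * ak - vkm1 * bk\<^sup>T
            - P 1 * (A * vk - vk * ak - vkm1 * bk\<^sup>T))
      \<and> (q 2 * beta 2 = A * q 1 - q 1 * ((q 1)\<^sup>T * (A * q 1 - vk * (beta 1)\<^sup>T))
            - vk * (beta 1)\<^sup>T - P 1 * (A * q 1 - vk * (beta 1)\<^sup>T))
      \<and> (\<forall>j\<ge>3.
          q j * beta j = A * q (j - 1) - q (j - 1) * ((q (j - 1))\<^sup>T * A * q (j - 1))
            - q (j - 2) * (beta (j - 1))\<^sup>T
            - (P 1 * A * q (j - 1) + q 1 * beta 1 * vk\<^sup>T * q (j - 1)))"
proof -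
  interpret L A W vk vkm1 ak bk n m p q qt beta P r
    by (rule L.intro) (fact assms)+
  show ?thesis using main1 main2 main3 by blast
qed

end
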